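(* For every $n\in\mathbb{N}$, \[ \frac{2n+1}{n+1}\,{}_3F_2\!\left(1,1,2n+2;\,2,n+2;\,\tfrac12\right)=H_n+2\log 2. \]
   Context: Pochhammer symbol: $(\alpha)_0=1$, $(\alpha)_k=\alpha(\alpha+1)\cdots(\alpha+k-1)$. ${}_3F_2(a,b,c;d,e;z)=\sum_{k\ge0}\frac{(a)_k(b)_k(c)_k}{(d)_k(e)_k}\frac{z^k}{k!}$. $H_n=\sum_{k=1}^{n}\frac1k$ ($H_0=0$). *)

theory Defs
  imports "HOL-Analysis.Analysis"
begin

definition hyp3F2 :: "real \<Rightarrow> real \<Rightarrow> real \<Rightarrow> real \<Rightarrow> real \<Rightarrow> real \<Rightarrow> real" where
  "hyp3F2 a b c d e z =
     (\<Sum>k. pochhammer a k * pochhammer b k * pochhammer c k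
            / (pochhammer d k * pochhammer e k) * z ^ k / fact k)"

end

theory Submission
  imports Defs
begin

definition vv :: "nat \<Rightarrow> nat \<Rightarrow> real" where
  "vv n k = pochhammer (2 * real n + 2) k / pochhammer (real n + 2) k / 2 ^ k"

lemma vv_pos: "vv n k > 0"
  unfolding vv_def by (intro divide_pos_pos pochhammer_pos) auto

lemma vv_Suc: "vv n (Suc k) = vv n k * (2 * real n + 2 + k) / (2 * (real n + 2 + k))"
  unfolding vv_def pochhammer_Suc
  using pochhammer_pos[of "real n + 2" k] by (simp add: field_simps)

lemma poch_shift: "(a::real) > 0 \<Longrightarrow> pochhammer (a + 1) k = pochhammer a k * (a + k) / a"
  using pochhammer_rec[of a k] pochhammer_Suc[of a k] by (simp add: field_simps)

lemma vv_next: "vv (Suc n) k = vv n k * ((2 * real n + 2 + k) * (2 * real n + 3 + k)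
      * (real n + 2)) / ((2 * real n + 2) * (2 * real n + 3) * (real n + 2 + k))"
proof -
    have e1: "2 * real (Suc n) + 2 = (2 * real n + 3) + 1" by simp
    have e2: "2 * real n + 3 = (2 * real n + 2) + 1" by simp
    have s1: "pochhammer (2 * real (Suc n) + 2) k = pochhammer (2 * real n + 3) k * (2 * real n + 3 + k) / (2 * real n + 3)"
      unfolding e1 by (rule poch_shift) simp
    have s2: "pochhammer (2 * real n + 3) k = pochhammer (2 * real n + 2) k * (2 * real n + 2 + k) / (2 * real n + 2)"
      unfolding e2 by (rule poch_shift) simp
  have e3: "real (Suc n) + 2 = (real n + 2) + 1" by simp
  have b: "pochhammer (real (Suc n) + 2) k = pochhammer (real n + 2) k * (real n + 2 + k) / (real n + 2)"
    unfolding e3 by (rule poch_shift) simp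
  have p: "pochhammer (real n + 2) k > 0" by (rule pochhammer_pos) simp
  show ?thesis unfolding vv_def s1 s2 b
    using p by (simp add: divide_simps)
qed

lemma vv_summable: "summable (vv n)"
proof (rule summable_ratio_test[where c = "3/4" and N = n])
  fix k assume k: "k \<ge> n"
  have r: "(2 * real n + 2 + k) / (2 * (real n + 2 + k)) \<le> 3/4"
    using k by (simp add: divide_simps)
  have "vv n (Suc k) = vv n k * ((2 * real n + 2 + k) / (2 * (real n + 2 + k)))"
    unfolding vv_Suc by simp
  also have "\<dots> \<le> vv n k * (3/4)"
    by (rule mult_left_mono[OF r]) (use vv_pos[of n k] in simp)
  finally show "norm (vv n (Suc k)) \<le> 3/4 * norm (vv n k)"
    using vv_pos[of n k] vv_pos[of n "Suc k"] by simp
qed simp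

lemma vv_lim: "vv n \<longlonglongrightarrow> 0"
  using summable_LIMSEQ_zero[OF vv_summable] .

definition cc :: "nat \<Rightarrow> real" where "cc n = (2 * real n + 1) / (real n + 1)"

lemma key_alg: "(n::real) \<ge> 0 \<Longrightarrow> (k::real) \<ge> 0 \<Longrightarrow>
  (2*(n+1)+1)/((n+1)+1) * ((x * ((2 * n + 2 + k) * (2 * n + 3 + k)
      * (n + 2)) / ((2 * n + 2) * (2 * n + 3) * (n + 2 + k)))/ (k+1))
  = (2*n+1)/(n+1) * (x/(k+1)) + (x - x * (2 * n + 2 + k) / (2 * (n + 2 + k)))/(n+1)"
proof -
  assume "n \<ge> 0" "k \<ge> 0"
  then have p: "n+1 > 0" "k+1>0" "n+2+k > 0" "2*n+2 > 0" "2*n+3>0" "(n+1)+1 > 0" by auto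
  have e: "x - x * (2 * n + 2 + k) / (2 * (n + 2 + k)) = x * (k+2) / (2*(n+2+k))"
    using p by (simp add: field_simps)
  show ?thesis unfolding e using p
    by (simp add: divide_simps) (simp add: algebra_simps)
qed

lemma key: "cc (Suc n) * (vv (Suc n) k / (k + 1)) = cc n * (vv n k / (k + 1))
   + (vv n k - vv n (Suc k)) / (real n + 1)"
proof -
  have "cc (Suc n) = (2*(real n+1)+1)/((real n+1)+1)" unfolding cc_def by simp
  then show ?thesis unfolding vv_next vv_Suc cc_def
    using key_alg[of "real n" "real k" "vv n k"] by (simp add: ac_simps)
qed

lemma base: "(\<lambda>k. cc 0 * (vv 0 k / (k + 1))) sums (harm 0 + 2 * ln 2)"
proof -
  have "(\<lambda>k. - ((-(-1/2::real))^k) / of_nat k) sums ln (1 + (-1/2))"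
    by (rule ln_series') simp
  then have "(\<lambda>k. (1/2::real)^k / of_nat k) sums ln 2"
    using sums_minus by (fastforce simp: ln_div)
  then have "(\<lambda>k. (1/2::real)^(Suc k) / of_nat (Suc k)) sums ln 2"
    by (subst sums_Suc_iff) simp
  then have "(\<lambda>k. 2 * ((1/2::real)^(Suc k) / of_nat (Suc k))) sums (2 * ln 2)"
    by (rule sums_mult)
  moreover have "\<And>k. 2 * ((1/2::real)^(Suc k) / of_nat (Suc k)) = cc 0 * (vv 0 k / (k + 1))"
  proof -
    fix k
    have "pochhammer (2::real) k > 0" by (rule pochhammer_pos) simp
    then show "2 * ((1/2::real)^(Suc k) / of_nat (Suc k)) = cc 0 * (vv 0 k / (k + 1))"
      unfolding cc_def vv_def by (simp add: divide_simps)
  qed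
  ultimately show ?thesis by (simp add: harm_def)
qed

lemma main_sums: "(\<lambda>k. cc n * (vv n k / (k + 1))) sums (harm n + 2 * ln 2)"
proof (induction n)
  case 0 then show ?case by (rule base)
next
  case (Suc n)
  have lim: "(\<lambda>k. vv n k / (real n + 1)) \<longlonglongrightarrow> 0"
    using tendsto_divide[OF vv_lim tendsto_const, of "real n + 1"] by simp
  have t: "(\<lambda>k. vv n k / (real n + 1) - vv n (Suc k) / (real n + 1)) sums (1 / (real n + 1))"
    using telescope_sums'[OF lim] by (simp add: vv_def)
  have eq: "(\<lambda>k. cc n * (vv n k / (k + 1)) + (vv n k / (real n + 1) - vv n (Suc k) / (real n + 1)))
      = (\<lambda>k. cc (Suc n) * (vv (Suc n) k / (k + 1)))"
    by (rule ext) (simp only: key diff_divide_distrib)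
  have "harm (Suc n) + 2 * ln 2 = harm n + 2 * ln 2 + 1 / (real n + 1)"
    by (simp add: harm_Suc inverse_eq_divide)
  then show ?case using sums_add[OF Suc.IH t] unfolding eq by (simp add: ac_simps)
qed

theorem mainTheorem14:
  fixes n :: nat
  shows "(2 * real n + 1) / (real n + 1)
           * hyp3F2 1 1 (2 * real n + 2) 2 (real n + 2) (1/2)
         = harm n + 2 * ln 2"
proof -
  have trm: "pochhammer 1 k * pochhammer 1 k * pochhammer (2 * real n + 2) k
            / (pochhammer 2 k * pochhammer (real n + 2) k) * (1/2) ^ k / fact k
         = vv n k / (k + 1)" for k
  proof -
    have p2: "pochhammer (2::real) k = fact (Suc k)"
      using pochhammer_rec[of "1::real" k] pochhammer_fact[of "Suc k", where 'a=real]
      by simp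
    show ?thesis unfolding vv_def p2 pochhammer_fact[symmetric]
      using pochhammer_pos[of "real n + 2" k] fact_gt_zero[of k, where 'a=real]
      by (simp add: divide_simps)
  qed
  have "hyp3F2 1 1 (2 * real n + 2) 2 (real n + 2) (1/2) = (\<Sum>k. vv n k / (k + 1))"
    unfolding hyp3F2_def trm ..
  moreover have summ: "summable (\<lambda>k. vv n k / (k + 1))"
  proof (rule summable_comparison_test[OF exI[of _ 0] vv_summable], intro allI impI)
    fix k :: nat
    have "vv n k / (k + 1) \<le> vv n k" using vv_pos[of n k] by (simp add: divide_simps)
    then show "norm (vv n k / (k + 1)) \<le> vv n k" using vv_pos[of n k] by simp
  qed
  ultimately have "cc n * hyp3F2 1 1 (2 * real n + 2) 2 (real n + 2) (1/2)
       = (\<Sum>k. cc n * (vv n k / (k + 1)))"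
    using suminf_mult[OF summ, of "cc n"] by simp
  also have "\<dots> = harm n + 2 * ln 2" using main_sums sums_unique by metis
  finally show ?thesis by (simp add: cc_def)
qed

end
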